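(* Let $F$ be a field and let $e_1,e_2,e_3\in M_n(F)$ be pairwise orthogonal idempotents (not necessarily nonzero) with $e_1+e_2+e_3=I_n$, of ranks $n_1,n_2,n_3$. Let $Z=\{a\in M_n(F): (e_1+e_2)ae_3=0,\ e_3a(e_1+e_2)=0\}$ (the centralizer of $e_1+e_2$ and $e_3$). Let $\sigma_1\ne\sigma_2\in F$ satisfy $k_1\sigma_1+k_2\sigma_2\ne0$ for all integer pairs $(k_1,k_2)\ne(0,0)$ with $0\le k_1\le n_1+n_2$, $0\le k_2\le n_3$, and set $\Lambda=\sigma_1(e_1+e_2)+\sigma_2e_3$. Then $$V=\big(Z\cap\Lambda^\perp\big)+e_1M_n(F)e_3+e_3M_n(F)e_2$$ is a Mathieu subspace of $M_n(F)$ of codimension $(n_1+n_2)n_3+1$.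
   Context: Let $\mathcal A$ be an associative algebra over a field $F$. An $F$-subspace $M\subseteq\mathcal A$ is a Mathieu subspace (MS) of $\mathcal A$ if for all $a,b,c\in\mathcal A$ such that $a^m\in M$ for all $m\ge 1$, there exists $N$ (depending on $a,b,c$) such that $ba^mc\in M$ for all $m\ge N$. $\Lambda^\perp=\{b\in M_n(F):\mathrm{Tr}(\Lambda b)=0\}$. *)

theory Defs
  imports "HOL-Analysis.Analysis"
begin

text \<open>Matrices in M_n(F) are modelled as 'a^'n^'n with 'a a field and 'n a finite
  index type (n = CARD('n)). The product is (**), the identity mat 1.\<close>

definition mscale :: "'a::field \<Rightarrow> 'a^'n^'n \<Rightarrow> 'a^'n^'n" where
  "mscale c A = (\<chi> i j. c * A $ i $ j)"

definition mpow :: "'a::field^'n^'n \<Rightarrow> nat \<Rightarrow> 'a^'n^'n" where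
  "mpow A m = ((\<lambda>X. X ** A) ^^ m) (mat 1)"

definition mathieu_subspace :: "('a::field^'n^'n) set \<Rightarrow> bool" where
  "mathieu_subspace M \<longleftrightarrow> module.subspace mscale M \<and>
     (\<forall>a b c. (\<forall>m\<ge>1. mpow a m \<in> M) \<longrightarrow> (\<exists>N. \<forall>m\<ge>N. b ** mpow a m ** c \<in> M))"

definition mat_codim :: "('a::field^'n^'n) set \<Rightarrow> nat" where
  "mat_codim V = vector_space.dim (mscale :: 'a \<Rightarrow> 'a^'n^'n \<Rightarrow> 'a^'n^'n) UNIV
                 - vector_space.dim (mscale :: 'a \<Rightarrow> 'a^'n^'n \<Rightarrow> 'a^'n^'n) V"

end

theory Submission
  imports Defs
begin


lemma mat_eqI: "(\<And>i j. A $ i $ j = B $ i $ j) \<Longrightarrow> A = B"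
  by (simp add: vec_eq_iff)

lemma mscale_nth[simp]: "mscale c A $ i $ j = c * A $ i $ j"
  by (simp add: mscale_def)

interpretation mvs: vector_space "mscale :: 'a::field \<Rightarrow> 'a^'n^'n \<Rightarrow> 'a^'n^'n"
  by unfold_locales (auto simp: vec_eq_iff algebra_simps)

definition munit :: "'n::finite \<times> 'n \<Rightarrow> 'a::field^'n^'n" where
  "munit p = (\<chi> k l. if k = fst p \<and> l = snd p then 1 else 0)"

lemma munit_nth: "munit (p::'n::finite\<times>'n) $ k $ l = (if k = fst p \<and> l = snd p then 1 else 0)"
  by (simp add: munit_def)

lemma inj_munit: "inj (munit :: 'n::finite \<times> 'n \<Rightarrow> 'a::field^'n^'n)"
  unfolding inj_def by (auto simp: munit_def vec_eq_iff split: if_splits)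

lemma sum_mat_nth: "(\<Sum>x\<in>A. f x) $ i $ j = (\<Sum>x\<in>A. f x $ i $ j)"
  by (induct A rule: infinite_finite_induct) auto

lemma munit_sum_nth:
  fixes c :: "'n::finite \<times> 'n \<Rightarrow> 'a::field"
  assumes "finite A"
  shows "(\<Sum>p\<in>A. mscale (c p) (munit p)) $ i $ j = (if (i,j) \<in> A then c (i,j) else 0)"
proof -
  have "(\<Sum>p\<in>A. mscale (c p) (munit p)) $ i $ j = (\<Sum>p\<in>A. if p = (i,j) then c p else 0)"
    unfolding sum_mat_nth by (intro sum.cong) (auto simp: munit_nth)
  also have "\<dots> = (if (i,j) \<in> A then c (i,j) else 0)"
    using assms by (simp add: sum.delta)
  finally show ?thesis .
qed

lemma munit_independent: "mvs.independent (munit ` A :: ('a::field^'n^'n) set)"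
proof -
  have fin: "finite (munit ` A :: ('a^'n^'n) set)" by simp
  show ?thesis
  unfolding mvs.independent_explicit_finite_subsets
  proof (intro allI impI)
    fix B u
    assume B: "B \<subseteq> munit ` A" "(\<Sum>v\<in>B. mscale (u v) v) = (0::'a^'n^'n)"
    obtain A' where A': "A' \<subseteq> A" "B = munit ` A'" using B(1) by (meson subset_imageE)
    have finA': "finite A'" by simp
    have eq: "(\<Sum>v\<in>B. mscale (u v) v) = (\<Sum>p\<in>A'. mscale (u (munit p)) (munit p))"
      unfolding A'(2) by (subst sum.reindex) (auto intro: inj_on_subset[OF inj_munit])
    show "\<forall>v\<in>B. u v = 0"
    proof
      fix v assume "v \<in> B"
      then obtain p where p: "p \<in> A'" "v = munit p" using A' by auto
      have "(\<Sum>p\<in>A'. mscale (u (munit p)) (munit p)) $ fst p $ snd p = 0"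
        using B(2) eq by simp
      then show "u v = 0" using p munit_sum_nth[OF finA', of "\<lambda>p. u (munit p)" "fst p" "snd p"] by simp
    qed
  qed
qed

lemma munit_span: "mvs.span (range munit) = (UNIV :: ('a::field^'n^'n) set)"
proof -
  have "M \<in> mvs.span (range munit)" for M :: "'a^'n^'n"
  proof -
    have e: "(\<Sum>p\<in>UNIV. mscale (M $ fst p $ snd p) (munit p)) $ i $ j = M $ i $ j" for i j
      using munit_sum_nth[of UNIV "\<lambda>p. M $ fst p $ snd p" i j] by simp
    have "M = (\<Sum>p\<in>UNIV. mscale (M $ fst p $ snd p) (munit p))"
      by (rule mat_eqI) (simp only: e)
    also have "\<dots> \<in> mvs.span (range munit)"
      by (intro mvs.span_sum mvs.span_scale mvs.span_base) auto
    finally show ?thesis .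
  qed
  then show ?thesis by auto
qed

interpretation mfd: finite_dimensional_vector_space "mscale :: 'a::field \<Rightarrow> 'a^'n^'n \<Rightarrow> 'a^'n^'n" "range munit"
  by unfold_locales (auto simp: munit_independent munit_span)

lemma mdim_UNIV: "mvs.dim (UNIV :: ('a::field^'n^'n) set) = CARD('n) * CARD('n)"
proof -
  have "mvs.dim (UNIV :: ('a::field^'n^'n) set) = card (range (munit :: _ \<Rightarrow> 'a^'n^'n))"
    by (rule mfd.dim_UNIV)
  also have "\<dots> = CARD('n \<times> 'n)" by (simp add: card_image inj_munit)
  finally show ?thesis by simp
qed




lemma mm_nth: "(A ** B) $ i $ j = (\<Sum>k\<in>UNIV. A $ i $ k * B $ k $ j)"
  by (simp add: matrix_matrix_mult_def)

lemma mm_add_r: "(A + B) ** (C::'a::field^'n^'n) = A ** C + B ** C"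
  by (rule mat_eqI) (simp add: mm_nth distrib_right sum.distrib)

lemma mm_diff_l: "(A::'a::field^'n^'n) ** (B - C) = A ** B - A ** C"
  by (rule mat_eqI) (simp add: mm_nth right_diff_distrib sum_subtractf)

lemma mm_diff_r: "(A - B) ** (C::'a::field^'n^'n) = A ** C - B ** C"
  by (rule mat_eqI) (simp add: mm_nth left_diff_distrib sum_subtractf)

lemma mm_scale_l: "mscale c A ** (B::'a::field^'n^'n) = mscale c (A ** B)"
  by (rule mat_eqI) (simp add: mm_nth sum_distrib_left mult.assoc)

lemma mm_scale_r: "(A::'a::field^'n^'n) ** mscale c B = mscale c (A ** B)"
  by (rule mat_eqI) (simp add: mm_nth sum_distrib_left mult.left_commute)

lemma mm_sum_l: "(\<Sum>x\<in>S. f x) ** (B::'a::field^'n^'n) = (\<Sum>x\<in>S. f x ** B)"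
  by (induct S rule: infinite_finite_induct) (auto simp: mm_add_r)

lemma mm_sum_r: "(B::'a::field^'n^'n) ** (\<Sum>x\<in>S. f x) = (\<Sum>x\<in>S. B ** f x)"
  by (induct S rule: infinite_finite_induct) (auto simp: matrix_add_ldistrib)

lemma trace_scale: "trace (mscale c (A::'a::field^'n^'n)) = c * trace A"
  by (simp add: trace_def sum_distrib_left)

lemma row_mm: "(A ** B) $ i = A $ i v* (B::'a::field^'n^'n)"
  by (simp add: vec_eq_iff matrix_matrix_mult_def vector_matrix_mult_def)

lemma vm_sum: "(\<Sum>v\<in>S. f v) v* (M::'a::field^'n^'n) = (\<Sum>v\<in>S. f v v* M)"
  by (induct S rule: infinite_finite_induct) (auto simp: vector_matrix_left_distrib)

lemma vm_scale: "(c *s x) v* (M::'a::field^'n^'n) = c *s (x v* M)"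
  by (simp add: vec_eq_iff vector_matrix_mult_def sum_distrib_left mult.assoc)

definition RS :: "'a::field^'n^'n \<Rightarrow> ('a^'n) set" where
  "RS M = range (\<lambda>x. x v* M)"

lemma RS_subspace: "vec.subspace (RS M)"
  unfolding RS_def vec.subspace_def
proof (intro conjI ballI allI)
  show "0 \<in> range (\<lambda>x. x v* M)" by (metis rangeI vector_matrix_mult_0)
  fix x y assume "x \<in> range (\<lambda>x. x v* M)" "y \<in> range (\<lambda>x. x v* M)"
  then obtain u v where "x = u v* M" "y = v v* M" by auto
  then show "x + y \<in> range (\<lambda>x. x v* M)"
    by (metis rangeI vector_matrix_left_distrib)
next
  fix c x assume "x \<in> range (\<lambda>x. x v* M)"
  then obtain u where "x = u v* M" by auto
  then show "c *s x \<in> range (\<lambda>x. x v* M)" by (metis rangeI vm_scale)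
qed

lemma RS_idem: "M ** M = M \<Longrightarrow> x \<in> RS M \<Longrightarrow> x v* M = x"
  unfolding RS_def by (auto simp: vector_matrix_mul_assoc)

lemma RS_memI: "x v* M = x \<Longrightarrow> x \<in> RS M"
  unfolding RS_def by (metis rangeI)

lemma rank_RS: "rank (M::'a::field^'n^'n) = vec.dim (RS M)"
proof -
  have xe: "x v* M = (\<Sum>i\<in>UNIV. x $ i *s row i M)" for x
    by (simp add: vec_eq_iff vector_matrix_mult_def row_def sum_component)
  have 1: "RS M \<subseteq> vec.span (rows M)"
    unfolding RS_def
  proof (clarsimp)
    fix x
    have "(\<Sum>i\<in>UNIV. x $ i *s row i M) \<in> vec.span (rows M)"
      by (intro vec.span_sum vec.span_scale vec.span_base) (auto simp: rows_def)
    then show "x v* M \<in> vec.span (rows M)" by (simp only: xe)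
  qed
  have "row i M = axis i 1 v* M" for i
    by (simp add: vec_eq_iff vector_matrix_mult_def row_def axis_def if_distrib if_distribR sum.delta cong: if_cong)
  then have 2: "rows M \<subseteq> RS M"
    unfolding RS_def rows_def by auto
  have "vec.span (rows M) = vec.span (RS M)"
    using 1 2 by (meson vec.span_eq vec.span_superset subset_trans)
  then show ?thesis
    unfolding row_rank_def_gen by (metis vec.dim_span)
qed

definition diagm :: "'n set \<Rightarrow> 'a::field^'n^'n" where
  "diagm J = (\<chi> i j. if i = j \<and> i \<in> J then 1 else 0)"

lemma diagm_mm_row: "(diagm J ** A) $ i = (if i \<in> J then A $ i else (0::'a::field^'n))"
  by (simp add: vec_eq_iff matrix_matrix_mult_def diagm_def if_distrib if_distribR sum.delta cong: if_cong)

lemma trace_diagm: "trace (diagm J :: 'a::field^'n^'n) = of_nat (card J)"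
  by (simp add: trace_def diagm_def sum.If_cases)




lemma idem_family:
  fixes e :: "'k \<Rightarrow> 'a::field^'n^'n"
  assumes fin: "finite K"
    and idem: "\<And>k. k \<in> K \<Longrightarrow> e k ** e k = e k"
    and orth: "\<And>k l. k \<in> K \<Longrightarrow> l \<in> K \<Longrightarrow> k \<noteq> l \<Longrightarrow> e k ** e l = 0"
    and sumI: "(\<Sum>k\<in>K. e k) = mat 1"
  obtains S T I where "(S::'a^'n^'n) ** T = mat 1" "T ** S = mat 1"
    "\<And>k. k \<in> K \<Longrightarrow> S ** e k ** T = diagm (I k)"
    "\<And>k. k \<in> K \<Longrightarrow> card (I k) = vec.dim (RS (e k))"
    "\<And>k l. k \<in> K \<Longrightarrow> l \<in> K \<Longrightarrow> k \<noteq> l \<Longrightarrow> I k \<inter> I l = {}"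
    "(\<Union>k\<in>K. I k) = UNIV"
proof -
  have "\<forall>k. \<exists>B. B \<subseteq> RS (e k) \<and> vec.independent B \<and> RS (e k) \<subseteq> vec.span B \<and> card B = vec.dim (RS (e k))"
    by (metis vec.basis_exists)
  then obtain B where B: "\<And>k. B k \<subseteq> RS (e k)" "\<And>k. vec.independent (B k)"
      "\<And>k. RS (e k) \<subseteq> vec.span (B k)" "\<And>k. card (B k) = vec.dim (RS (e k))"
    by metis
  have finB: "finite (B k)" for k using B(2) vec.finiteI_independent by blast
  have fix1: "x v* e k = x" if "k \<in> K" "x \<in> B k" for k x
    using RS_idem[OF idem[OF that(1)]] B(1) that by blast
  have kill: "x v* e l = 0" if "k \<in> K" "l \<in> K" "k \<noteq> l" "x \<in> B k" for k l x
  proof -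
    have "x v* e l = (x v* e k) v* e l" using fix1 that by simp
    also have "\<dots> = 0" by (simp add: vector_matrix_mul_assoc orth that)
    finally show ?thesis .
  qed
  have disj: "B k \<inter> B l = {}" if "k \<in> K" "l \<in> K" "k \<noteq> l" for k l
  proof (rule ccontr)
    assume "B k \<inter> B l \<noteq> {}"
    then obtain x where x: "x \<in> B k" "x \<in> B l" by auto
    have "x = 0" using fix1[OF that(2) x(2)] kill[OF that x(1)] by simp
    then show False using x(1) B(2)[of k] vec.dependent_zero by blast
  qed
  define BB where "BB = (\<Union>k\<in>K. B k)"
  have finBB: "finite BB" unfolding BB_def using fin finB by auto
  have indBB: "vec.independent BB"
    unfolding vec.independent_explicit
  proof (intro conjI finBB allI impI ballI)
    fix c v assume c: "(\<Sum>v\<in>BB. c v *s v) = 0" and v: "v \<in> BB"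
    then obtain k where k: "k \<in> K" "v \<in> B k" unfolding BB_def by auto
    have "(\<Sum>v\<in>BB. c v *s v) v* e k = (\<Sum>v\<in>BB. c v *s (v v* e k))"
      by (simp add: vm_sum vm_scale)
    also have "\<dots> = (\<Sum>v\<in>BB. if v \<in> B k then c v *s v else 0)"
    proof (rule sum.cong[OF refl])
      fix w assume "w \<in> BB"
      then obtain l where l: "l \<in> K" "w \<in> B l" unfolding BB_def by auto
      show "c w *s (w v* e k) = (if w \<in> B k then c w *s w else 0)"
        using fix1[OF k(1)] kill[OF l(1) k(1) _ l(2)] l(2) by (cases "l = k") auto
    qed
    also have "\<dots> = (\<Sum>v\<in>B k. c v *s v)"
      using k finBB by (simp add: sum.If_cases BB_def Int_absorb1 UN_upper)
    finally have "(\<Sum>v\<in>B k. c v *s v) = 0" using c by simp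
    then show "c v = 0"
      using B(2)[of k] k(2) finB unfolding vec.independent_explicit by blast
  qed
  have spanBB: "vec.span BB = UNIV"
  proof -
    have "x \<in> vec.span BB" for x
    proof -
      have "x = x v* (\<Sum>k\<in>K. e k)" using sumI by simp
      also have "\<dots> = (\<Sum>k\<in>K. x v* e k)"
        by (induct K rule: infinite_finite_induct) (auto simp: vector_matrix_mult_add_rdistrib)
      also have "\<dots> \<in> vec.span BB"
      proof (rule vec.span_sum)
        fix k assume "k \<in> K"
        have "x v* e k \<in> vec.span (B k)" using B(3)[of k] unfolding RS_def by auto
        moreover have "vec.span (B k) \<subseteq> vec.span BB"
          using \<open>k \<in> K\<close> by (intro vec.span_mono) (auto simp: BB_def)
        ultimately show "x v* e k \<in> vec.span BB" by auto
      qed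
      finally show ?thesis .
    qed
    then show ?thesis by auto
  qed
  have cardBB: "card BB = CARD('n)"
  proof -
    have "vec.dim (UNIV :: ('a^'n) set) = card BB"
      by (rule vec.dim_eq_card[OF _ indBB]) (simp add: spanBB)
    then show ?thesis by (metis vec_dim_card)
  qed
  obtain g where g: "bij_betw g (UNIV :: 'n set) BB"
    using finite_same_card_bij[of "UNIV :: 'n set" BB] finBB cardBB by auto
  define I where "I k = {i. g i \<in> B k}" for k
  define S :: "'a^'n^'n" where "S = (\<chi> i. g i)"
  have rowsS: "rows S = BB"
    using g unfolding rows_def row_def S_def bij_betw_def by (auto simp: vec_lambda_eta)
  obtain T where TS: "T ** S = mat 1"
    using matrix_left_invertible_span_rows_gen[of S] rowsS spanBB by auto
  then have ST: "S ** T = mat 1" using matrix_left_right_inverse by blast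
  have Se: "S ** e k = diagm (I k) ** S" if k: "k \<in> K" for k
  proof -
    have "(S ** e k) $ i = (diagm (I k) ** S) $ i" for i
    proof -
      have gi: "g i \<in> BB" using g bij_betwE by blast
      then obtain l where l: "l \<in> K" "g i \<in> B l" unfolding BB_def by auto
      have 1: "(S ** e k) $ i = g i v* e k" by (simp add: row_mm S_def)
      have 2: "(diagm (I k) ** S) $ i = (if i \<in> I k then g i else 0)"
        by (simp add: diagm_mm_row S_def)
      show ?thesis
        unfolding 1 2
        using fix1[OF k] kill[OF l(1) k _ l(2)] l disj[OF l(1) k] by (cases "l = k") (auto simp: I_def)
    qed
    then show ?thesis by (simp add: vec_eq_iff)
  qed
  show ?thesis
  proof (rule that[of S T I])
    show "S ** T = mat 1" "T ** S = mat 1" by (fact ST) (fact TS)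
    fix k assume k: "k \<in> K"
    show "S ** e k ** T = diagm (I k)"
      using Se[OF k] ST by (metis matrix_mul_assoc matrix_mul_rid)
    have "card (I k) = card (B k)"
    proof -
      have "I k = g -` B k" unfolding I_def by auto
      moreover have "B k \<subseteq> range g" using g k unfolding bij_betw_def BB_def by auto
      moreover have "inj g" using g unfolding bij_betw_def by simp
      ultimately show ?thesis by (simp add: card_vimage_inj)
    qed
    then show "card (I k) = vec.dim (RS (e k))" using B(4) by simp
  next
    fix k l assume "k \<in> K" "l \<in> K" "k \<noteq> l"
    then show "I k \<inter> I l = {}" using disj unfolding I_def by auto
  next
    show "(\<Union>k\<in>K. I k) = UNIV"
      using g unfolding I_def BB_def bij_betw_def by auto
  qed
qed




lemma trace_idem:
  fixes M :: "'a::field^'n^'n"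
  assumes "M ** M = M"
  shows "trace M = of_nat (vec.dim (RS M))"
proof -
  define e where "e b = (if b then M else mat 1 - M)" for b
  have c1: "M ** (mat 1 - M) = 0" "(mat 1 - M) ** M = 0"
    using assms by (simp_all add: mm_diff_l mm_diff_r)
  have c2: "(mat 1 - M) ** (mat 1 - M) = mat 1 - M"
    using assms by (simp add: mm_diff_l mm_diff_r)
  have idem: "e k ** e k = e k" if "k \<in> UNIV" for k
    using assms c2 by (simp add: e_def)
  have orth: "e k ** e l = 0" if "k \<in> UNIV" "l \<in> UNIV" "k \<noteq> l" for k l
    using c1 that by (cases k) (simp_all add: e_def)
  have sumI: "(\<Sum>k\<in>UNIV. e k) = mat 1" by (simp add: UNIV_bool e_def)
  have ex: "\<exists>S T I. (S::'a^'n^'n) ** T = mat 1 \<and> T ** S = mat 1 \<and> S ** e True ** T = diagm (I True)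
          \<and> card (I True) = vec.dim (RS (e True))"
  proof (rule idem_family[of UNIV e])
    fix S T :: "'a^'n^'n" and I
    assume "S ** T = mat 1" "T ** S = mat 1" "\<And>k. k \<in> UNIV \<Longrightarrow> S ** e k ** T = diagm (I k)"
      "\<And>k. k \<in> UNIV \<Longrightarrow> card (I k) = vec.dim (RS (e k))"
      "\<And>k l. k \<in> UNIV \<Longrightarrow> l \<in> UNIV \<Longrightarrow> k \<noteq> l \<Longrightarrow> I k \<inter> I l = {}"
      "(\<Union>k\<in>UNIV. I k) = UNIV"
    then show ?thesis by blast
  qed (use idem orth sumI in auto)
  then obtain S T I where ST: "(S::'a^'n^'n) ** T = mat 1" "T ** S = mat 1"
    and D: "S ** e True ** T = diagm (I True)"
    and C: "card (I True) = vec.dim (RS (e True))" by blast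
  have "T ** (S ** M ** T) ** S = (T ** S) ** M ** (T ** S)"
    by (simp add: matrix_mul_assoc)
  then have "M = T ** diagm (I True) ** S" using D ST by (simp add: e_def)
  then have "trace M = trace (T ** (diagm (I True) ** S))" by (simp add: matrix_mul_assoc)
  also have "\<dots> = trace ((diagm (I True) ** S) ** T)"
    by (rule trace_mul_sym)
  also have "\<dots> = trace (diagm (I True) :: 'a^'n^'n)"
    using ST by (simp flip: matrix_mul_assoc)
  also have "\<dots> = of_nat (card (I True))" by (rule trace_diagm)
  finally show ?thesis using C by (simp add: e_def)
qed




lemma mpow_0[simp]: "mpow A 0 = mat 1"
  by (simp add: mpow_def)

lemma mpow_Suc: "mpow A (Suc m) = mpow A m ** A"
  by (simp add: mpow_def)

lemma mpow_add: "mpow (A::'a::field^'n^'n) (m + k) = mpow A m ** mpow A k"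
  by (induct k) (simp_all add: mpow_Suc matrix_mul_assoc)

lemma mpow_1[simp]: "mpow A 1 = A"
  by (simp add: mpow_def)

lemma mpow_Suc0[simp]: "mpow A (Suc 0) = A"
  by (simp add: mpow_def)

lemma mpow_Suc': "mpow (A::'a::field^'n^'n) (Suc m) = A ** mpow A m"
  using mpow_add[of A 1 m] by simp

lemma mpow_comm: "(A::'a::field^'n^'n) ** B = B ** A \<Longrightarrow> mpow A m ** B = B ** mpow A m"
  by (induct m) (simp_all add: mpow_Suc flip: matrix_mul_assoc, simp add: matrix_mul_assoc)

lemma mpow_mult_comm: "(A::'a::field^'n^'n) ** B = B ** A \<Longrightarrow> mpow (A ** B) m = mpow A m ** mpow B m"
proof (induct m)
  case (Suc m)
  have c: "mpow B m ** A = A ** mpow B m" using mpow_comm[of A B m] Suc(2)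
    by (metis mpow_comm)
  have "mpow (A ** B) (Suc m) = (mpow A m ** mpow B m) ** (A ** B)"
    using Suc by (simp add: mpow_Suc)
  also have "\<dots> = mpow A m ** (mpow B m ** A) ** B"
    by (simp only: matrix_mul_assoc)
  also have "\<dots> = mpow A m ** (A ** mpow B m) ** B"
    by (simp only: c)
  also have "\<dots> = mpow (A) (Suc m) ** mpow B (Suc m)"
    by (simp only: mpow_Suc matrix_mul_assoc)
  finally show ?case .
qed simp

lemma mm_subspace_l: "mvs.subspace (S :: ('a::field^'n^'n) set) \<Longrightarrow> mvs.subspace {x. A ** x \<in> S}"
  unfolding mvs.subspace_def by (simp add: matrix_add_ldistrib mm_scale_r)

lemma mm_subspace_r: "mvs.subspace (S :: ('a::field^'n^'n) set) \<Longrightarrow> mvs.subspace {x. x ** A \<in> S}"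
  unfolding mvs.subspace_def by (simp add: mm_add_r mm_scale_l)

lemma comm_subspace: "mvs.subspace {x :: 'a::field^'n^'n. x ** A = A ** x}"
  unfolding mvs.subspace_def by (simp add: mm_add_r mm_scale_l matrix_add_ldistrib mm_scale_r)

context
  fixes a :: "'a::field^'n^'n"
begin

definition "P0 = mvs.span (range (mpow a))"

lemma P0_subspace: "mvs.subspace P0"
  unfolding P0_def by (rule mvs.subspace_span)

lemma P0_pow: "mpow a m \<in> P0"
  unfolding P0_def by (rule mvs.span_base) auto

lemma P0_mult_pow: "y \<in> P0 \<Longrightarrow> mpow a m ** y \<in> P0"
proof -
  have "range (mpow a) \<subseteq> {y. mpow a m ** y \<in> P0}"
    using P0_pow by (auto simp flip: mpow_add)
  then have "P0 \<subseteq> {y. mpow a m ** y \<in> P0}"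
    unfolding P0_def
    by (rule mvs.span_minimal) (rule mm_subspace_l, rule mvs.subspace_span)
  then show "y \<in> P0 \<Longrightarrow> mpow a m ** y \<in> P0" by auto
qed

lemma P0_mult: "x \<in> P0 \<Longrightarrow> y \<in> P0 \<Longrightarrow> x ** y \<in> P0"
proof -
  assume y: "y \<in> P0"
  have "range (mpow a) \<subseteq> {x. x ** y \<in> P0}"
    using P0_mult_pow y by auto
  then have "P0 \<subseteq> {x. x ** y \<in> P0}"
    unfolding P0_def
    by (rule mvs.span_minimal) (rule mm_subspace_r, rule mvs.subspace_span)
  then show "x \<in> P0 \<Longrightarrow> x ** y \<in> P0" by auto
qed

lemma P0_comm_pow: "y \<in> P0 \<Longrightarrow> mpow a m ** y = y ** mpow a m"
proof -
  have "range (mpow a) \<subseteq> {y. y ** mpow a m = mpow a m ** y}"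
    by (auto simp flip: mpow_add simp: add.commute)
  then have "P0 \<subseteq> {y. y ** mpow a m = mpow a m ** y}"
    unfolding P0_def by (rule mvs.span_minimal) (rule comm_subspace)
  then show "y \<in> P0 \<Longrightarrow> mpow a m ** y = y ** mpow a m" by auto
qed

lemma P0_comm: "x \<in> P0 \<Longrightarrow> y \<in> P0 \<Longrightarrow> x ** y = y ** x"
proof -
  assume y: "y \<in> P0"
  have "range (mpow a) \<subseteq> {x. x ** y = y ** x}"
    using P0_comm_pow y by auto
  then have "P0 \<subseteq> {x. x ** y = y ** x}"
    unfolding P0_def by (rule mvs.span_minimal) (rule comm_subspace)
  then show "x \<in> P0 \<Longrightarrow> x ** y = y ** x" by auto
qed

lemma P0_mpow: "x \<in> P0 \<Longrightarrow> mpow x m \<in> P0"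
  by (induct m) (use P0_pow[of 0] in simp, simp add: mpow_Suc P0_mult)

definition "P1 = mvs.span {mpow a m | m. m \<ge> 1}"

lemma P1_a: "x \<in> P0 \<Longrightarrow> a ** x \<in> P1"
proof -
  have "range (mpow a) \<subseteq> {x. a ** x \<in> P1}"
    unfolding P1_def by (auto simp flip: mpow_Suc' intro!: mvs.span_base)
  then have "P0 \<subseteq> {x. a ** x \<in> P1}"
    unfolding P0_def
    by (rule mvs.span_minimal) (unfold P1_def, rule mm_subspace_l, rule mvs.subspace_span)
  then show "x \<in> P0 \<Longrightarrow> a ** x \<in> P1" by auto
qed

lemma P1_W: "mvs.subspace W \<Longrightarrow> \<forall>m\<ge>1. mpow a m \<in> W \<Longrightarrow> P1 \<subseteq> W"
  unfolding P1_def by (rule mvs.span_minimal) auto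

lemma exists_k: "\<exists>k. mpow a k \<in> mvs.span (mpow a ` {k<..})"
proof (rule ccontr)
  assume H: "\<not> ?thesis"
  then have H': "mpow a k \<notin> mvs.span (mpow a ` {k<..})" for k by blast
  define D where "D = mvs.dim (UNIV :: ('a^'n^'n) set)"
  define G where "G j = mpow a ` {j..D}" for j
  have step: "t \<le> D + 1 \<Longrightarrow> mvs.dim (G (D + 1 - t)) = t" for t
  proof (induct t)
    case 0
    have "G (D + 1) = {}" unfolding G_def by auto
    then show ?case by simp
  next
    case (Suc t)
    define j where "j = D - t"
    have j1: "D + 1 - Suc t = j" "D + 1 - t = Suc j" using Suc(2) unfolding j_def by auto
    have Gj: "G j = insert (mpow a j) (G (Suc j))"
      using Suc(2) unfolding G_def j_def by (auto simp: atLeastAtMostSuc_conv[symmetric] Icc_eq_insert_lb_nat)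
    have "G (Suc j) \<subseteq> mpow a ` {j<..}" unfolding G_def by auto
    then have "mpow a j \<notin> mvs.span (G (Suc j))"
      using H'[of j] mvs.span_mono by blast
    then have "mvs.dim (G j) = mvs.dim (G (Suc j)) + 1"
      unfolding Gj by (simp add: mfd.dim_insert)
    then show ?case using Suc j1 by simp
  qed
  have "mvs.dim (G 0) = D + 1" using step[of "D + 1"] by simp
  moreover have "mvs.dim (G 0) \<le> D" unfolding D_def by (rule mfd.dim_subset) simp
  ultimately show False by simp
qed

lemma exists_R: "\<exists>k R. R \<in> P0 \<and> mpow a k = mpow a k ** (a ** R)"
proof -
  obtain k where k: "mpow a k \<in> mvs.span (mpow a ` {k<..})" using exists_k by blast
  define T where "T = {x. \<exists>R\<in>P0. x = mpow a (Suc k) ** R}"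
  have subT: "mvs.subspace T"
    unfolding mvs.subspace_def T_def
  proof (intro conjI ballI allI)
    show "0 \<in> {x. \<exists>R\<in>P0. x = mpow a (Suc k) ** R}"
    proof -
      have "0 \<in> P0" using P0_subspace by (simp add: mvs.subspace_def)
      then show ?thesis by (auto intro!: bexI[of _ 0])
    qed
  next
    fix x y assume "x \<in> {x. \<exists>R\<in>P0. x = mpow a (Suc k) ** R}" "y \<in> {x. \<exists>R\<in>P0. x = mpow a (Suc k) ** R}"
    then obtain R1 R2 where "R1 \<in> P0" "R2 \<in> P0" "x = mpow a (Suc k) ** R1" "y = mpow a (Suc k) ** R2" by auto
    then show "x + y \<in> {x. \<exists>R\<in>P0. x = mpow a (Suc k) ** R}"
      using P0_subspace by (auto simp: mvs.subspace_def matrix_add_ldistrib intro!: bexI[of _ "R1 + R2"])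
  next
    fix c x assume "x \<in> {x. \<exists>R\<in>P0. x = mpow a (Suc k) ** R}"
    then obtain R1 where "R1 \<in> P0" "x = mpow a (Suc k) ** R1" by auto
    then show "mscale c x \<in> {x. \<exists>R\<in>P0. x = mpow a (Suc k) ** R}"
      using P0_subspace by (auto simp: mvs.subspace_def mm_scale_r intro!: bexI[of _ "mscale c R1"])
  qed
  have "mpow a ` {k<..} \<subseteq> T"
  proof
    fix x assume "x \<in> mpow a ` {k<..}"
    then obtain m where m: "m > k" "x = mpow a m" by auto
    then have "x = mpow a (Suc k) ** mpow a (m - Suc k)"
      by (simp flip: mpow_add)
    then show "x \<in> T" unfolding T_def using P0_pow by blast
  qed
  then have "mvs.span (mpow a ` {k<..}) \<subseteq> T" by (rule mvs.span_minimal[OF _ subT])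
  then obtain R where R: "R \<in> P0" "mpow a k = mpow a (Suc k) ** R" using k unfolding T_def by auto
  then have "mpow a k = mpow a k ** (a ** R)" by (simp add: mpow_Suc matrix_mul_assoc)
  then show ?thesis using R(1) by blast
qed

lemma nil_of_no_idem:
  assumes W: "mvs.subspace W" and pw: "\<forall>m\<ge>1. mpow a m \<in> W"
    and noid: "\<forall>p\<in>W. p ** p = p \<longrightarrow> p = 0"
  shows "\<exists>N. mpow a N = 0"
proof -
  obtain k R where R: "R \<in> P0" and rel: "mpow a k = mpow a k ** (a ** R)" using exists_R by blast
  define Y where "Y = a ** R"
  have aP: "a \<in> P0" using P0_pow[of 1] by simp
  have YP: "Y \<in> P0" unfolding Y_def using aP R by (rule P0_mult)
  have Yk: "mpow Y k = mpow a k ** mpow R k"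
    unfolding Y_def by (rule mpow_mult_comm) (rule P0_comm[OF aP R])
  have cRa: "mpow R k ** mpow a k = mpow a k ** mpow R k"
    using P0_comm[OF P0_mpow[OF R] P0_pow] by simp
  have Yfix: "mpow Y (Suc k) = mpow Y k"
  proof -
    have "mpow Y (Suc k) = mpow a k ** mpow R k ** Y" by (simp add: mpow_Suc Yk)
    also have "\<dots> = mpow R k ** (mpow a k ** Y)" by (simp add: cRa matrix_mul_assoc)
    also have "\<dots> = mpow R k ** mpow a k" using rel by (simp add: Y_def)
    also have "\<dots> = mpow Y k" by (simp add: cRa Yk)
    finally show ?thesis .
  qed
  have Ystab: "mpow Y (k + j) = mpow Y k" for j
  proof (induct j)
    case (Suc j)
    have "mpow Y (k + Suc j) = mpow Y (k + j) ** Y" by (simp add: mpow_Suc)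
    also have "\<dots> = mpow Y (Suc k)" using Suc by (simp add: mpow_Suc)
    finally show ?case using Yfix by simp
  qed simp
  have YinP1: "mpow Y (Suc j) \<in> P1" for j
  proof -
    have "mpow Y (Suc j) = a ** (R ** mpow Y j)"
      by (simp add: mpow_Suc' Y_def matrix_mul_assoc)
    moreover have "R ** mpow Y j \<in> P0" using R P0_mpow[OF YP] by (rule P0_mult)
    ultimately show ?thesis using P1_a by simp
  qed
  define p where "p = mpow Y (Suc k)"
  have pW: "p \<in> W" using YinP1 P1_W[OF W pw] unfolding p_def by blast
  have "p ** p = mpow Y (Suc k + Suc k)" unfolding p_def by (rule mpow_add[symmetric])
  also have "\<dots> = mpow Y k" using Ystab[of "Suc (Suc k)"] by (simp add: algebra_simps)
  also have "\<dots> = p" unfolding p_def using Yfix by simp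
  finally have "p = 0" using noid pW by blast
  then have Y0: "mpow Y k = 0" unfolding p_def using Yfix by simp
  have "mpow a k = mpow a k ** mpow Y j" for j
  proof (induct j)
    case (Suc j)
    have "mpow a k ** mpow Y (Suc j) = (mpow a k ** mpow Y j) ** Y"
      by (simp add: mpow_Suc matrix_mul_assoc)
    also have "\<dots> = mpow a k" using Suc rel by (simp add: Y_def)
    finally show ?case by simp
  qed simp
  then have "mpow a k = 0" using Y0 by (metis times0_right)
  then show ?thesis by blast
qed

end




lemma vm_linear: "Vector_Spaces.linear (*s) (*s) (\<lambda>y. y v* (M::'a::field^'n^'n))"
proof -
  have "(\<lambda>y. y v* M) = (*v) (transpose M)"
    by (rule ext) (metis vector_transpose_matrix transpose_transpose)
  then show ?thesis by simp
qed


lemma dim_le_card_n: "vec.dim (S :: ('a::field^'n) set) \<le> CARD('n)"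
  by (metis vec.dim_subset subset_UNIV vec_dim_card)

lemma RS_zero: "vec.dim (RS (M::'a::field^'n^'n)) = 0 \<Longrightarrow> M = 0"
proof -
  assume "vec.dim (RS M) = 0"
  then have "RS M \<subseteq> {0}" by simp
  then have "axis i 1 v* M = 0" for i unfolding RS_def by auto
  moreover have "axis i 1 v* M = M $ i" for i
    by (simp add: vec_eq_iff vector_matrix_mult_def axis_def if_distrib if_distribR sum.delta cong: if_cong)
  ultimately show "M = 0" by (simp add: vec_eq_iff)
qed

locale setting =
  fixes e1 e2 e3 :: "'a::field^'n^'n" and \<sigma>1 \<sigma>2 :: 'a
  assumes idem: "e1 ** e1 = e1" "e2 ** e2 = e2" "e3 ** e3 = e3"
    and orth: "e1 ** e2 = 0" "e2 ** e1 = 0" "e1 ** e3 = 0" "e3 ** e1 = 0"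
              "e2 ** e3 = 0" "e3 ** e2 = 0"
    and sum_id: "e1 + e2 + e3 = mat 1"
    and sigma_gen: "\<forall>k1 k2 :: int. (k1, k2) \<noteq> (0, 0) \<and> 0 \<le> k1 \<and> k1 \<le> int (rank e1 + rank e2)
                      \<and> 0 \<le> k2 \<and> k2 \<le> int (rank e3) \<longrightarrow> of_int k1 * \<sigma>1 + of_int k2 * \<sigma>2 \<noteq> 0"
begin

definition "Lam = mscale \<sigma>1 (e1 + e2) + mscale \<sigma>2 e3"

definition "Vc = {v. e3 ** v ** e1 = 0 \<and> e2 ** v ** e3 = 0 \<and> trace (Lam ** v) = 0}"

lemma family3:
  obtains S T :: "'a^'n^'n" and I1 I2 I3 where "S ** T = mat 1" "T ** S = mat 1"
    "S ** e1 ** T = diagm I1" "S ** e2 ** T = diagm I2" "S ** e3 ** T = diagm I3"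
    "card I1 = rank e1" "card I2 = rank e2" "card I3 = rank e3"
    "I1 \<inter> I2 = {}" "I1 \<inter> I3 = {}" "I2 \<inter> I3 = {}" "I1 \<union> I2 \<union> I3 = UNIV"
proof -
  define e where "e k = (if k = (1::nat) then e1 else if k = 2 then e2 else e3)" for k
  have ex: "\<exists>S T I. (S::'a^'n^'n) ** T = mat 1 \<and> T ** S = mat 1 \<and> (\<forall>k\<in>{1,2,3}. S ** e k ** T = diagm (I k)
     \<and> card (I k) = vec.dim (RS (e k))) \<and> (\<forall>k\<in>{1,2,3}. \<forall>l\<in>{1,2,3}. k \<noteq> l \<longrightarrow> I k \<inter> I l = {})
     \<and> (\<Union>k\<in>{1,2,3}. I k) = UNIV"
  proof (rule idem_family[of "{1,2,3}" e])
    fix S T :: "'a^'n^'n" and I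
    assume "S ** T = mat 1" "T ** S = mat 1" "\<And>k. k \<in> {1,2,3} \<Longrightarrow> S ** e k ** T = diagm (I k)"
      "\<And>k. k \<in> {1,2,3} \<Longrightarrow> card (I k) = vec.dim (RS (e k))"
      "\<And>k l. k \<in> {1,2,3} \<Longrightarrow> l \<in> {1,2,3} \<Longrightarrow> k \<noteq> l \<Longrightarrow> I k \<inter> I l = {}"
      "(\<Union>k\<in>{1,2,3}. I k) = UNIV"
    then show ?thesis by blast
  qed (use idem orth sum_id in \<open>auto simp: e_def add.assoc\<close>)
  then obtain S T I where "(S::'a^'n^'n) ** T = mat 1" "T ** S = mat 1"
    "\<forall>k\<in>{1,2,3}. S ** e k ** T = diagm (I k) \<and> card (I k) = vec.dim (RS (e k))"
    "\<forall>k\<in>{1,2,3}. \<forall>l\<in>{1,2,3}. k \<noteq> l \<longrightarrow> I k \<inter> I l = {}"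
    "(\<Union>k\<in>{1,2,3}. I k) = UNIV" by blast
  then show ?thesis
    by (intro that[of S T "I 1" "I 2" "I 3"]) (auto simp: e_def rank_RS)
qed

lemma rank_sum: "rank e1 + rank e2 + rank e3 = CARD('n)"
proof -
  obtain S T :: "'a^'n^'n" and I1 I2 I3 where "S ** T = mat 1" "T ** S = mat 1"
    "S ** e1 ** T = diagm I1" "S ** e2 ** T = diagm I2" "S ** e3 ** T = diagm I3"
    "card I1 = rank e1" "card I2 = rank e2" "card I3 = rank e3"
    "I1 \<inter> I2 = {}" "I1 \<inter> I3 = {}" "I2 \<inter> I3 = {}" "I1 \<union> I2 \<union> I3 = UNIV"
    by (rule family3)
  then show ?thesis
    by (metis card_Un_disjoint finite Int_Un_distrib2 Un_empty)
qed

lemma e3_ass: "X ** e3 ** e1 = 0" "X ** e3 ** e2 = 0" "X ** e1 ** e3 = 0" "X ** e2 ** e3 = 0"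
  "X ** e1 ** e2 = 0" "X ** e2 ** e1 = 0" "X ** e1 ** e1 = X ** e1" "X ** e2 ** e2 = X ** e2"
  "X ** e3 ** e3 = X ** e3"
  using orth idem by (simp_all flip: matrix_mul_assoc)

lemma noid: "p \<in> Vc \<Longrightarrow> p ** p = p \<Longrightarrow> p = 0"
proof -
  assume pV: "p \<in> Vc" and pp: "p ** p = p"
  have h1: "e3 ** p ** e1 = 0" and h2: "e2 ** p ** e3 = 0" and h3: "trace (Lam ** p) = 0"
    using pV unfolding Vc_def by auto
  have h1': "X ** e3 ** p ** e1 = 0" for X :: "'a^'n^'n" using h1 by (metis matrix_mul_assoc times0_right)
  have h2': "X ** e2 ** p ** e3 = 0" for X :: "'a^'n^'n" using h2 by (metis matrix_mul_assoc times0_right)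
  have e3eq: "e3 = mat 1 - e1 - e2" using sum_id by (simp add: algebra_simps)
  define D where "D = e3 ** p ** e3"
  have DD: "D ** D = D"
  proof -
    have "D ** D = e3 ** p ** e3 ** p ** e3"
      unfolding D_def by (simp add: matrix_mul_assoc e3_ass)
    also have "\<dots> = e3 ** p ** (mat 1 - e1 - e2) ** p ** e3" by (simp flip: e3eq)
    also have "\<dots> = e3 ** p ** p ** e3 - e3 ** p ** e1 ** p ** e3 - e3 ** p ** e2 ** p ** e3"
      by (simp add: mm_diff_l mm_diff_r)
    also have "\<dots> = D" unfolding D_def using h1 h2' pp by (simp flip: matrix_mul_assoc)
    finally show ?thesis .
  qed
  define r where "r = vec.dim (RS p)"
  define s where "s = vec.dim (RS D)"
  have tp: "trace p = of_nat r" unfolding r_def by (rule trace_idem[OF pp])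
  have tD: "trace D = of_nat s" unfolding s_def by (rule trace_idem[OF DD])
  have t3: "trace (e3 ** p) = trace D"
  proof -
    have "trace (e3 ** p) = trace (e3 ** (e3 ** p))" by (simp add: matrix_mul_assoc idem)
    also have "\<dots> = trace ((e3 ** p) ** e3)" by (rule trace_mul_sym)
    finally show ?thesis unfolding D_def .
  qed
  have t12: "trace ((e1 + e2) ** p) = trace p - trace (e3 ** p)"
  proof -
    have "e1 + e2 = mat 1 - e3" using sum_id by (simp add: algebra_simps)
    then show ?thesis by (simp add: mm_diff_r trace_sub)
  qed
  have eq: "\<sigma>1 * (of_nat r - of_nat s) + \<sigma>2 * of_nat s = 0"
  proof -
    have "trace (Lam ** p) = \<sigma>1 * trace ((e1 + e2) ** p) + \<sigma>2 * trace (e3 ** p)"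
      unfolding Lam_def by (simp only: mm_add_r mm_scale_l trace_add trace_scale)
    then show ?thesis using h3 unfolding t12 t3 tp tD by simp
  qed
  have sr: "s \<le> r"
  proof -
    have "RS D \<subseteq> (\<lambda>y. y v* e3) ` RS p"
    proof
      fix x assume "x \<in> RS D"
      then obtain z where "x = z v* D" unfolding RS_def by auto
      then have "x = ((z v* e3) v* p) v* e3" unfolding D_def by (simp add: vector_matrix_mul_assoc)
      then show "x \<in> (\<lambda>y. y v* e3) ` RS p" unfolding RS_def by auto
    qed
    then have "s \<le> vec.dim ((\<lambda>y. y v* e3) ` RS p)" unfolding s_def by (rule vec.dim_subset)
    also have "\<dots> \<le> r" unfolding r_def by (rule vec.dim_image_le[OF vm_linear])
    finally show ?thesis .
  qed
  have s3: "s \<le> rank e3"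
  proof -
    have "RS D \<subseteq> RS e3"
      unfolding RS_def D_def by (auto simp flip: vector_matrix_mul_assoc)
    then show ?thesis unfolding s_def rank_RS by (rule vec.dim_subset)
  qed
  have rs: "r + rank e3 \<le> CARD('n) + s"
  proof -
    have int: "RS p \<inter> RS e3 \<subseteq> RS D"
    proof
      fix x assume x: "x \<in> RS p \<inter> RS e3"
      then have "x v* p = x" "x v* e3 = x" using RS_idem[OF pp] RS_idem[OF idem(3)] by auto
      then have "x v* D = x" unfolding D_def by (simp flip: vector_matrix_mul_assoc)
      then show "x \<in> RS D" by (rule RS_memI)
    qed
    have "vec.dim {x + y |x y. x \<in> RS p \<and> y \<in> RS e3} + vec.dim (RS p \<inter> RS e3) = r + rank e3"
      unfolding r_def rank_RS by (rule vec.dim_sums_Int[OF RS_subspace RS_subspace])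
    moreover have "vec.dim {x + y |x y. x \<in> RS p \<and> y \<in> RS e3} \<le> CARD('n)" by (rule dim_le_card_n)
    moreover have "vec.dim (RS p \<inter> RS e3) \<le> s" unfolding s_def using int by (rule vec.dim_subset)
    ultimately show ?thesis by linarith
  qed
  have "r = s \<and> s = 0"
  proof (rule ccontr)
    assume ne: "\<not> (r = s \<and> s = 0)"
    have "of_int (int r - int s) * \<sigma>1 + of_int (int s) * \<sigma>2 \<noteq> 0"
      using sigma_gen[rule_format, of "int r - int s" "int s"] ne sr s3 rs rank_sum by auto
    moreover have "of_int (int r - int s) * \<sigma>1 + of_int (int s) * \<sigma>2 = 0"
      using eq sr by (simp add: of_nat_diff algebra_simps)
    ultimately show False by simp
  qed
  then have "r = 0" by simp
  then show "p = 0" unfolding r_def by (rule RS_zero)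
qed

end




lemma trace_zero[simp]: "trace (0::'a::field^'n^'n) = 0"
  by (simp add: trace_def)

context setting
begin

lemmas ass = e3_ass orth idem matrix_mul_assoc mm_add_r matrix_add_ldistrib

lemma Lam_r: "Lam ** e1 = mscale \<sigma>1 e1" "Lam ** e2 = mscale \<sigma>1 e2" "Lam ** e3 = mscale \<sigma>2 e3"
  unfolding Lam_def by (simp_all add: mm_add_r mm_scale_l orth idem)

lemma tr0: "trace (e1 ** m ** e3) = 0" "trace (e3 ** m ** e2) = 0"
proof -
  have "trace ((e1 ** m) ** e3) = trace (e3 ** (e1 ** m))" by (rule trace_mul_sym)
  then show "trace (e1 ** m ** e3) = 0" by (simp add: matrix_mul_assoc orth)
  have "trace ((e3 ** m) ** e2) = trace (e2 ** (e3 ** m))" by (rule trace_mul_sym)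
  then show "trace (e3 ** m ** e2) = 0" by (simp add: matrix_mul_assoc orth)
qed

lemma trLam0: "trace (Lam ** (e1 ** m ** e3)) = 0" "trace (Lam ** (e3 ** m ** e2)) = 0"
proof -
  have "Lam ** (e1 ** m ** e3) = mscale \<sigma>1 (e1 ** m ** e3)"
    by (simp add: matrix_mul_assoc Lam_r mm_scale_l)
  then show "trace (Lam ** (e1 ** m ** e3)) = 0" by (simp add: trace_scale tr0)
  have "Lam ** (e3 ** m ** e2) = mscale \<sigma>2 (e3 ** m ** e2)"
    by (simp add: matrix_mul_assoc Lam_r mm_scale_l)
  then show "trace (Lam ** (e3 ** m ** e2)) = 0" by (simp add: trace_scale tr0)
qed

lemma V_eq: "{z + x + y | z x y. z \<in> {a. (e1 + e2) ** a ** e3 = 0 \<and> e3 ** a ** (e1 + e2) = 0}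
     \<inter> {b. trace (Lam ** b) = 0} \<and> x \<in> {e1 ** m ** e3 | m. True} \<and> y \<in> {e3 ** m ** e2 | m. True}} = Vc"
proof (intro set_eqI iffI)
  fix v assume "v \<in> {z + x + y | z x y. z \<in> {a. (e1 + e2) ** a ** e3 = 0 \<and> e3 ** a ** (e1 + e2) = 0}
     \<inter> {b. trace (Lam ** b) = 0} \<and> x \<in> {e1 ** m ** e3 | m. True} \<and> y \<in> {e3 ** m ** e2 | m. True}}"
  then obtain z m1 m2 where v: "v = z + e1 ** m1 ** e3 + e3 ** m2 ** e2"
    and z1: "(e1 + e2) ** z ** e3 = 0" and z2: "e3 ** z ** (e1 + e2) = 0" and z3: "trace (Lam ** z) = 0"
    by blast
  have "e3 ** z ** (e1 + e2) ** e1 = 0" using z2 by simp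
  then have a1: "e3 ** z ** e1 = 0" by (simp add: ass)
  have "e2 ** ((e1 + e2) ** z ** e3) = 0" using z1 by simp
  then have a2: "e2 ** z ** e3 = 0" by (simp add: ass)
  have "e3 ** v ** e1 = 0" using a1 unfolding v by (simp add: ass)
  moreover have "e2 ** v ** e3 = 0" using a2 unfolding v by (simp add: ass)
  moreover have "trace (Lam ** v) = 0" using z3 unfolding v
    by (simp add: matrix_add_ldistrib trace_add trLam0)
  ultimately show "v \<in> Vc" unfolding Vc_def by simp
next
  fix v assume "v \<in> Vc"
  then have h1: "e3 ** v ** e1 = 0" and h2: "e2 ** v ** e3 = 0" and h3: "trace (Lam ** v) = 0"
    unfolding Vc_def by auto
  have h2': "X ** e2 ** v ** e3 = 0" for X :: "'a^'n^'n" using h2 by (metis matrix_mul_assoc times0_right)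
  define z where "z = (e1 + e2) ** v ** (e1 + e2) + e3 ** v ** e3"
  have "v = (e1 + e2 + e3) ** v ** (e1 + e2 + e3)" using sum_id by simp
  also have "\<dots> = z + e1 ** v ** e3 + e3 ** v ** e2"
    unfolding z_def using h1 h2' h2 by (simp add: mm_add_r matrix_add_ldistrib add_ac)
  finally have veq: "v = z + e1 ** v ** e3 + e3 ** v ** e2" .
  have z1: "(e1 + e2) ** z ** e3 = 0" unfolding z_def by (simp add: ass)
  have z2: "e3 ** z ** (e1 + e2) = 0" unfolding z_def by (simp add: ass)
  have "trace (Lam ** v) = trace (Lam ** z) + trace (Lam ** (e1 ** v ** e3)) + trace (Lam ** (e3 ** v ** e2))"
    by (subst veq) (simp only: matrix_add_ldistrib trace_add)
  then have z3: "trace (Lam ** z) = 0" using h3 by (simp add: trLam0)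
  show "v \<in> {z + x + y | z x y. z \<in> {a. (e1 + e2) ** a ** e3 = 0 \<and> e3 ** a ** (e1 + e2) = 0}
     \<inter> {b. trace (Lam ** b) = 0} \<and> x \<in> {e1 ** m ** e3 | m. True} \<and> y \<in> {e3 ** m ** e2 | m. True}}"
    using z1 z2 z3 veq by blast
qed

lemma Vc_subspace: "mvs.subspace Vc"
  unfolding mvs.subspace_def Vc_def
  by (simp add: matrix_add_ldistrib mm_add_r mm_scale_l mm_scale_r trace_add trace_scale)

lemma Vc_mathieu: "mathieu_subspace Vc"
  unfolding mathieu_subspace_def
proof (intro conjI allI impI)
  show "mvs.subspace Vc" by (rule Vc_subspace)
  fix a b c :: "'a^'n^'n"
  assume "\<forall>m\<ge>1. mpow a m \<in> Vc"
  then obtain N where N: "mpow a N = 0"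
    using nil_of_no_idem[OF Vc_subspace] noid by blast
  have "b ** mpow a m ** c \<in> Vc" if "m \<ge> N" for m
  proof -
    have "mpow a m = mpow a N ** mpow a (m - N)" using that by (simp flip: mpow_add)
    then have "mpow a m = 0" using N by simp
    then show ?thesis using Vc_subspace by (simp add: mvs.subspace_def)
  qed
  then show "\<exists>N. \<forall>m\<ge>N. b ** mpow a m ** c \<in> Vc" by blast
qed

end




interpretation mfp: finite_dimensional_vector_space_pair_1
  "mscale :: 'a::field \<Rightarrow> 'a^'n^'n \<Rightarrow> 'a^'n^'n" "range munit" "mscale :: 'a::field \<Rightarrow> 'a^'n^'n \<Rightarrow> 'a^'n^'n"
  by unfold_locales

lemma conj_linear: "Vector_Spaces.linear mscale mscale (\<lambda>M. (S::'a::field^'n^'n) ** (M::'a::field^'n^'n) ** (T::'a^'n^'n))"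
  by unfold_locales (simp_all add: matrix_add_ldistrib mm_add_r mm_scale_l mm_scale_r)

lemma diagm_nth: "diagm B $ k $ j = (if k = j \<and> k \<in> B then 1 else (0::'a::field))"
  by (simp add: diagm_def)

lemma diag_sand: "(diagm A ** w ** diagm B) $ i $ j = (if i \<in> A \<and> j \<in> B then w $ i $ j else (0::'a::field))"
proof -
  have "(diagm A ** w ** diagm B) $ i $ j = (\<Sum>k\<in>UNIV. (diagm A ** w) $ i $ k * diagm B $ k $ j)"
    by (simp add: mm_nth)
  also have "\<dots> = (diagm A ** w) $ i $ j * (if j \<in> B then 1 else 0)"
  proof -
    have "(\<Sum>k\<in>UNIV. (diagm A ** w) $ i $ k * diagm B $ k $ j)
        = (\<Sum>k\<in>UNIV. if k = j then (diagm A ** w) $ i $ j * (if j \<in> B then 1 else 0) else 0)"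
      by (rule sum.cong) (auto simp: diagm_nth)
    then show ?thesis by simp
  qed
  also have "(diagm A ** w) $ i $ j = (if i \<in> A then w $ i $ j else 0)"
    by (simp add: diagm_mm_row)
  finally show ?thesis by simp
qed

lemma trace_diag_mult:
  assumes "\<And>i j. i \<noteq> j \<Longrightarrow> X $ i $ j = 0"
  shows "trace (X ** w) = (\<Sum>i\<in>UNIV. X $ i $ i * w $ i $ i :: 'a::field)"
proof -
  have "(X ** w) $ i $ i = X $ i $ i * w $ i $ i" for i
  proof -
    have "(X ** w) $ i $ i = (\<Sum>k\<in>UNIV. if k = i then X $ i $ i * w $ i $ i else 0)"
      unfolding mm_nth by (rule sum.cong) (auto simp: assms)
    then show ?thesis by simp
  qed
  then show ?thesis unfolding trace_def by simp
qed




lemma span_support: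
  fixes A :: "('n::finite \<times> 'n) set"
  assumes "w \<in> mvs.span (munit ` A :: ('a::field^'n^'n) set)" "p \<notin> A"
  shows "w $ fst p $ snd p = 0"
proof -
  have sub: "mvs.subspace {w :: 'a^'n^'n. \<forall>p. p \<notin> A \<longrightarrow> w $ fst p $ snd p = 0}"
    unfolding mvs.subspace_def by auto
  have "munit ` A \<subseteq> {w :: 'a^'n^'n. \<forall>p. p \<notin> A \<longrightarrow> w $ fst p $ snd p = 0}"
    by (auto simp: munit_nth)
  then have "mvs.span (munit ` A) \<subseteq> {w :: 'a^'n^'n. \<forall>p. p \<notin> A \<longrightarrow> w $ fst p $ snd p = 0}"
    by (rule mvs.span_minimal[OF _ sub])
  then show ?thesis using assms by auto
qed

lemma diag_codim:
  fixes wt :: "'n::finite \<Rightarrow> 'a::field" and Z0 :: "('n \<times> 'n) set"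
  assumes offd: "\<And>i. (i, i) \<notin> Z0" and w0: "wt i0 \<noteq> 0"
  defines "Vd \<equiv> {w :: 'a^'n^'n. (\<forall>p\<in>Z0. w $ fst p $ snd p = 0) \<and> (\<Sum>i\<in>UNIV. wt i * w $ i $ i) = 0}"
  shows "mvs.dim Vd + (card Z0 + 1) = CARD('n) * CARD('n)"
proof -
  define A where "A = insert (i0, i0) Z0"
  define C where "C = mvs.span (munit ` A :: ('a^'n^'n) set)"
  have subV: "mvs.subspace Vd"
    unfolding mvs.subspace_def Vd_def by (simp add: sum.distrib algebra_simps flip: sum_distrib_left)
  have subC: "mvs.subspace C" unfolding C_def by (rule mvs.subspace_span)
  have dimC: "mvs.dim C = card Z0 + 1"
  proof -
    have "mvs.dim C = card (munit ` A :: ('a^'n^'n) set)"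
      unfolding C_def by (rule mvs.dim_span_eq_card_independent[OF munit_independent])
    also have "\<dots> = card A" by (rule card_image[OF inj_on_subset[OF inj_munit]]) simp
    also have "\<dots> = card Z0 + 1" unfolding A_def using offd by simp
    finally show ?thesis .
  qed
  have int0: "Vd \<inter> C \<subseteq> {0}"
  proof
    fix w assume w: "w \<in> Vd \<inter> C"
    have out: "w $ i $ j = 0" if "(i, j) \<notin> A" for i j
      using span_support[of w A "(i,j)"] w that unfolding C_def by auto
    have inZ: "w $ i $ j = 0" if "(i, j) \<in> Z0" for i j
      using w that unfolding Vd_def by force
    have "(\<Sum>i\<in>UNIV. wt i * w $ i $ i) = 0" using w unfolding Vd_def by auto
    moreover have "(\<Sum>i\<in>UNIV. wt i * w $ i $ i) = (\<Sum>i\<in>UNIV. if i = i0 then wt i0 * w $ i0 $ i0 else 0)"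
      by (rule sum.cong) (auto simp: out A_def offd)
    ultimately have "w $ i0 $ i0 = 0" using w0 by simp
    then have "w $ i $ j = 0" for i j
      using out inZ unfolding A_def by (cases "(i,j) \<in> A") (auto simp: A_def)
    then show "w \<in> {0}" by (simp add: vec_eq_iff)
  qed
  have dim0: "mvs.dim (Vd \<inter> C) = 0" using int0 by simp
  have sumU: "{x + y |x y. x \<in> Vd \<and> y \<in> C} = UNIV"
  proof (intro set_eqI iffI)
    fix M :: "'a^'n^'n"
    have finZ: "finite Z0" by simp
    define t where "t = (\<Sum>i\<in>UNIV. wt i * M $ i $ i) / wt i0"
    define c where "c = (\<Sum>p\<in>Z0. mscale (M $ fst p $ snd p) (munit p)) + mscale t (munit (i0, i0))"
    have cC: "c \<in> C" unfolding c_def C_def A_def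
      by (intro mvs.span_add mvs.span_sum mvs.span_scale mvs.span_base) auto
    have cnth: "c $ i $ j = (if (i, j) \<in> Z0 then M $ i $ j else 0) + (if i = i0 \<and> j = i0 then t else 0)" for i j
      unfolding c_def using munit_sum_nth[OF finZ, of "\<lambda>p. M $ fst p $ snd p" i j]
      by (simp add: munit_nth)
    have "M - c \<in> Vd"
      unfolding Vd_def
    proof (intro CollectI conjI ballI)
      fix p assume "p \<in> Z0"
      then show "(M - c) $ fst p $ snd p = 0"
        using offd[of i0] cnth[of "fst p" "snd p"] by (cases p) auto
    next
      have "(\<Sum>i\<in>UNIV. wt i * (M - c) $ i $ i) = (\<Sum>i\<in>UNIV. wt i * M $ i $ i) - (\<Sum>i\<in>UNIV. if i = i0 then wt i0 * t else 0)"
      proof -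
        have per: "wt i * (M - c) $ i $ i = wt i * M $ i $ i - (if i = i0 then wt i0 * t else 0)" for i
          using cnth[of i i] offd[of i] by (auto simp: algebra_simps)
        show ?thesis by (simp only: per sum_subtractf)
      qed
      also have "\<dots> = 0" using w0 by (simp add: t_def)
      finally show "(\<Sum>i\<in>UNIV. wt i * (M - c) $ i $ i) = 0" .
    qed
    moreover have "M = (M - c) + c" by simp
    ultimately show "M \<in> {x + y |x y. x \<in> Vd \<and> y \<in> C}" using cC by blast
  qed simp
  have "mvs.dim {x + y |x y. x \<in> Vd \<and> y \<in> C} + mvs.dim (Vd \<inter> C) = mvs.dim Vd + mvs.dim C"
    by (rule mfd.dim_sums_Int[OF subV subC])
  then show ?thesis using sumU dim0 dimC mdim_UNIV[where 'a='a and 'n='n] by simp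
qed




context setting
begin

lemma codim_Vc: "mat_codim Vc = (rank e1 + rank e2) * rank e3 + 1"
proof -
  obtain S T :: "'a^'n^'n" and I1 I2 I3 where ST: "S ** T = mat 1" "T ** S = mat 1"
    and D: "S ** e1 ** T = diagm I1" "S ** e2 ** T = diagm I2" "S ** e3 ** T = diagm I3"
    and C: "card I1 = rank e1" "card I2 = rank e2" "card I3 = rank e3"
    and P: "I1 \<inter> I2 = {}" "I1 \<inter> I3 = {}" "I2 \<inter> I3 = {}" "I1 \<union> I2 \<union> I3 = UNIV"
    by (rule family3)
  have ST': "X ** S ** T = X" "X ** T ** S = X" for X :: "'a^'n^'n"
    using ST by (simp_all flip: matrix_mul_assoc)
  have bk: "T ** (S ** X ** T) ** S = X" for X
    using ST by (simp add: matrix_mul_assoc ST')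
  have bkk: "S ** (T ** X ** S) ** T = X" for X
    using ST by (simp add: matrix_mul_assoc ST')
  have E: "e1 = T ** diagm I1 ** S" "e2 = T ** diagm I2 ** S" "e3 = T ** diagm I3 ** S"
    using bk[of e1] bk[of e2] bk[of e3] D by simp_all
  define wt where "wt i = (if i \<in> I3 then \<sigma>2 else \<sigma>1)" for i
  define Z0 where "Z0 = I3 \<times> I1 \<union> I2 \<times> I3"
  define Vd where "Vd = {w :: 'a^'n^'n. (\<forall>p\<in>Z0. w $ fst p $ snd p = 0) \<and> (\<Sum>i\<in>UNIV. wt i * w $ i $ i) = 0}"
  define Ld where "Ld = mscale \<sigma>1 (diagm I1 + diagm I2) + mscale \<sigma>2 (diagm I3 :: 'a^'n^'n)"
  have "T ** Ld ** S = mscale \<sigma>1 (e1 + e2) + mscale \<sigma>2 e3"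
    unfolding Ld_def E by (simp add: matrix_add_ldistrib mm_add_r mm_scale_l mm_scale_r)
  then have LamE: "Lam = T ** Ld ** S" by (simp add: Lam_def)
  have Ld_nth: "Ld $ i $ j = (if i = j then wt i else 0)" for i j
    using P unfolding Ld_def wt_def by (auto simp: diagm_nth)
  have key: "v \<in> Vc \<longleftrightarrow> S ** v ** T \<in> Vd" for v
  proof -
    define w where "w = S ** v ** T"
    have v: "v = T ** w ** S" unfolding w_def by (simp add: bk)
    have s31: "e3 ** v ** e1 = T ** (diagm I3 ** w ** diagm I1) ** S"
      unfolding v E by (simp add: matrix_mul_assoc ST')
    have s23: "e2 ** v ** e3 = T ** (diagm I2 ** w ** diagm I3) ** S"
      unfolding v E by (simp add: matrix_mul_assoc ST')
    have z1: "e3 ** v ** e1 = 0 \<longleftrightarrow> diagm I3 ** w ** diagm I1 = 0"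
      using s31 bkk by (metis times0_left times0_right)
    have z2: "e2 ** v ** e3 = 0 \<longleftrightarrow> diagm I2 ** w ** diagm I3 = 0"
      using s23 bkk by (metis times0_left times0_right)
    have z1': "diagm I3 ** w ** diagm I1 = 0 \<longleftrightarrow> (\<forall>i\<in>I3. \<forall>j\<in>I1. w $ i $ j = 0)"
      by (auto simp: vec_eq_iff diag_sand)
    have z2': "diagm I2 ** w ** diagm I3 = 0 \<longleftrightarrow> (\<forall>i\<in>I2. \<forall>j\<in>I3. w $ i $ j = 0)"
      by (auto simp: vec_eq_iff diag_sand)
    have tr: "trace (Lam ** v) = (\<Sum>i\<in>UNIV. wt i * w $ i $ i)"
    proof -
      have "trace (Lam ** v) = trace (T ** (Ld ** S ** v))" by (simp add: LamE matrix_mul_assoc)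
      also have "\<dots> = trace (Ld ** S ** v ** T)" by (rule trace_mul_sym)
      also have "\<dots> = trace (Ld ** w)" by (simp add: w_def matrix_mul_assoc)
      also have "\<dots> = (\<Sum>i\<in>UNIV. Ld $ i $ i * w $ i $ i)" by (rule trace_diag_mult) (simp add: Ld_nth)
      finally show ?thesis by (simp add: Ld_nth)
    qed
    show ?thesis
      unfolding Vc_def Vd_def Z0_def mem_Collect_eq z1 z2 z1' z2' tr w_def[symmetric] by (simp add: ball_Un)
  qed
  have img: "(\<lambda>v. S ** v ** T) ` Vc = Vd"
  proof (intro set_eqI iffI)
    fix w assume "w \<in> Vd"
    then have "T ** w ** S \<in> Vc" using key bkk by simp
    then show "w \<in> (\<lambda>v. S ** v ** T) ` Vc" using bkk by (metis image_eqI)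
  qed (use key in auto)
  have inj: "inj_on (\<lambda>v. S ** v ** T) X" for X
    by (rule inj_onI) (metis bk)
  have dimeq: "mvs.dim Vc = mvs.dim Vd"
  proof -
    have "mvs.dim ((\<lambda>v. S ** v ** T) ` Vc) = mvs.dim Vc"
      by (rule mfp.dim_image_eq[OF conj_linear[of S T] inj])
    then show ?thesis using img by simp
  qed
  have offd: "(i, i) \<notin> Z0" for i using P unfolding Z0_def by auto
  obtain i0 where w0: "wt i0 \<noteq> 0"
  proof (cases "I1 \<union> I2 = {}")
    case True
    then have "I3 = UNIV" using P by auto
    then have "card I3 \<ge> 1" by (simp add: Suc_le_eq card_gt_0_iff)
    then have "rank e3 \<ge> 1" using C by simp
    then have "\<sigma>2 \<noteq> 0" using sigma_gen[rule_format, of 0 1] by auto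
    then show ?thesis using that[of undefined] \<open>I3 = UNIV\<close> by (simp add: wt_def)
  next
    case False
    then obtain i where i: "i \<in> I1 \<union> I2" by auto
    then have "i \<notin> I3" using P by auto
    have "card (I1 \<union> I2) \<ge> 1" using i by (auto simp: Suc_le_eq card_gt_0_iff)
    then have "rank e1 + rank e2 \<ge> 1" using C P card_Un_disjoint[of I1 I2] by simp
    then have "\<sigma>1 \<noteq> 0" using sigma_gen[rule_format, of 1 0] by auto
    then show ?thesis using that[of i] \<open>i \<notin> I3\<close> by (simp add: wt_def)
  qed
  have dd: "mvs.dim Vd + (card Z0 + 1) = CARD('n) * CARD('n)"
    unfolding Vd_def by (rule diag_codim[of Z0 wt i0, OF offd w0])
  have cZ: "card Z0 = card I3 * card I1 + card I2 * card I3"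
  proof -
    have "I3 \<times> I1 \<inter> I2 \<times> I3 = {}" using P by auto
    then show ?thesis unfolding Z0_def by (simp add: card_Un_disjoint card_cartesian_product)
  qed
  have "mat_codim Vc = CARD('n) * CARD('n) - mvs.dim Vc"
    unfolding mat_codim_def using mdim_UNIV[where 'a='a and 'n='n] by simp
  also have "\<dots> = card Z0 + 1" using dd dimeq by simp
  finally show ?thesis using cZ C by (simp add: algebra_simps)
qed

end



theorem mainTheorem4:
  fixes e1 e2 e3 :: "'a::field^'n^'n"
    and \<sigma>1 \<sigma>2 :: 'a
    and n1 n2 n3 :: nat
  assumes idem: "e1 ** e1 = e1" "e2 ** e2 = e2" "e3 ** e3 = e3"
    and orth: "e1 ** e2 = 0" "e2 ** e1 = 0" "e1 ** e3 = 0" "e3 ** e1 = 0"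
              "e2 ** e3 = 0" "e3 ** e2 = 0"
    and sum_id: "e1 + e2 + e3 = mat 1"
    and ranks: "n1 = rank e1" "n2 = rank e2" "n3 = rank e3"
    and sigma_ne: "\<sigma>1 \<noteq> \<sigma>2"
    and sigma_gen: "\<forall>k1 k2 :: int. (k1, k2) \<noteq> (0, 0) \<and> 0 \<le> k1 \<and> k1 \<le> int (n1 + n2)
                      \<and> 0 \<le> k2 \<and> k2 \<le> int n3 \<longrightarrow> of_int k1 * \<sigma>1 + of_int k2 * \<sigma>2 \<noteq> 0"
  shows "let Z = {a. (e1 + e2) ** a ** e3 = 0 \<and> e3 ** a ** (e1 + e2) = 0};
             \<Lambda> = mscale \<sigma>1 (e1 + e2) + mscale \<sigma>2 e3;
             \<Lambda>perp = {b. trace (\<Lambda> ** b) = 0};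
             V = {z + x + y | z x y. z \<in> Z \<inter> \<Lambda>perp \<and> x \<in> {e1 ** m ** e3 | m. True}
                                   \<and> y \<in> {e3 ** m ** e2 | m. True}}
         in mathieu_subspace V \<and> mat_codim V = (n1 + n2) * n3 + 1"
proof -
  interpret setting e1 e2 e3 \<sigma>1 \<sigma>2
    using idem orth sum_id sigma_gen unfolding ranks by unfold_locales auto
  show ?thesis
    unfolding Let_def V_eq[unfolded Lam_def] ranks
    using Vc_mathieu codim_Vc by simp
qed

end
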